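(* Let $(P,\le,A_1\ldots A_k)$ be a regular poset with node tree $(\mathcal{N},\prec)$, and suppose $M$ is a descendant of $N$ in $(\mathcal{N},\prec)$. Then (1) $\mathrm{width}(M)\le\mathrm{width}(N)$; (2) if $\mathrm{width}(M)=\mathrm{width}(N)$, then $\mathrm{surplus}(M)\le\mathrm{surplus}(N)$.
   Context: Let $(P,\le)$ be a finite poset of width $w$. For $A\subseteq P$ let $A{\uparrow}=\{y: x\le y\text{ for some }x\in A\}$, $A{\downarrow}=\{y: y\le x\text{ for some }x\in A\}$. For maximal antichains $A,B$ write $A\sqsubseteq B$ if $A\subseteq B{\downarrow}$, and $A\sqsubset B$ if also $A\ne B$. For disjoint antichains $A\sqsubset B$, $(A,B,<)$ is the bipartite graph with classes $A,B$ and edges $(a<b)$ for $a\in A,b\in B$, $a<b$; it is regular if every edge lies in a perfect matching. A regular poset $(P,\le,A_1\ldots A_k)$: $A_1,\dots,A_k$ are maximum antichains partitioning $P$, $(\{A_1,\dots,A_k\},\sqsubseteq)$ is a linear order with minimum $A_1$ and maximum $A_2$, $a<b$ for all $a\in A_1,b\in A_2$, and for every $t\in[2,k]$ and every $A_p\sqsubset A_s$ consecutive in $(\{A_1,\dots,A_t\},\sqsubseteq)$ the graph $(A_p,A_s,<)$ is regular. A node is a bipartite graph $(X,Y,<)$ where, for some such consecutive pair $A_p\sqsubset A_s$ (at some stage $t$), $X\subseteq A_p$, $Y\subseteq A_s$ and $X\cup Y$ is the vertex set of a connected component of $(A_p,A_s,<)$. Its width is $\mathrm{width}(N)=|X|=|Y|$;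 $\mathrm{Int}(N)=X{\uparrow}\cap Y{\downarrow}$; its surplus $\mathrm{surplus}(N)$ is the largest $k$ such that $|A{\uparrow}\cap Y|\ge\min\{|A|+k,|Y|\}$ for all non-empty $A\subseteq X$, with $\mathrm{surplus}(N)=\infty$ if $N$ is a complete bipartite graph. Node tree $(\mathcal{N},\prec)$: $\mathcal{N}$ is the set of all nodes; when for $t\ge3$ the antichain $A_t$ is inserted between $A_p\sqsubset A_s$ consecutive at stage $t-1$, each node $M$ of $(A_p,A_t,<)$ or $(A_t,A_s,<)$ is declared a child of the unique node $N$ of $(A_p,A_s,<)$ with $\mathrm{Int}(M)\subset\mathrm{Int}(N)$. This gives a rooted tree with root $(A_1,A_2,<)$; descendants are defined via the child relation. *)

theory Defs
  imports Main "HOL-Library.Extended_Real"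
begin

text \<open>Finite posets are subsets P of a type with a partial order; the order on P is the
induced one. Antichains are indexed A 1, ..., A k.\<close>

definition up_set :: "'a::order set \<Rightarrow> 'a set \<Rightarrow> 'a set" where
  "up_set P A = {y \<in> P. \<exists>x\<in>A. x \<le> y}"

definition down_set :: "'a::order set \<Rightarrow> 'a set \<Rightarrow> 'a set" where
  "down_set P A = {y \<in> P. \<exists>x\<in>A. y \<le> x}"

definition antichain :: "'a::order set \<Rightarrow> 'a set \<Rightarrow> bool" where
  "antichain P A \<longleftrightarrow> A \<subseteq> P \<and> (\<forall>x\<in>A. \<forall>y\<in>A. x \<le> y \<longrightarrow> x = y)"

definition maximum_antichain :: "'a::order set \<Rightarrow> 'a set \<Rightarrow> bool" where
  "maximum_antichain P A \<longleftrightarrow> antichain P A \<and> (\<forall>B. antichain P B \<longrightarrow> card B \<le> card A)"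

definition ac_le :: "'a::order set \<Rightarrow> 'a set \<Rightarrow> 'a set \<Rightarrow> bool" where
  "ac_le P A B \<longleftrightarrow> A \<subseteq> down_set P B"

definition ac_less :: "'a::order set \<Rightarrow> 'a set \<Rightarrow> 'a set \<Rightarrow> bool" where
  "ac_less P A B \<longleftrightarrow> ac_le P A B \<and> A \<noteq> B"

definition consecutive :: "'a::order set \<Rightarrow> (nat \<Rightarrow> 'a set) \<Rightarrow> nat \<Rightarrow> nat \<Rightarrow> nat \<Rightarrow> bool" where
  "consecutive P A t p s \<longleftrightarrow> p \<in> {1..t} \<and> s \<in> {1..t} \<and> ac_less P (A p) (A s) \<and>
     \<not> (\<exists>q\<in>{1..t}. ac_less P (A p) (A q) \<and> ac_less P (A q) (A s))"

definition regular_bip :: "'a::order set \<Rightarrow> 'a set \<Rightarrow> bool" where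
  "regular_bip A B \<longleftrightarrow> (\<forall>a\<in>A. \<forall>b\<in>B. a < b \<longrightarrow>
     (\<exists>f. bij_betw f A B \<and> (\<forall>x\<in>A. x < f x) \<and> f a = b))"

definition regular_poset :: "'a::order set \<Rightarrow> (nat \<Rightarrow> 'a set) \<Rightarrow> nat \<Rightarrow> bool" where
  "regular_poset P A k \<longleftrightarrow>
     2 \<le> k \<and>
     (\<forall>i\<in>{1..k}. maximum_antichain P (A i)) \<and>
     (\<forall>i\<in>{1..k}. A i \<noteq> {}) \<and>
     (\<forall>i\<in>{1..k}. \<forall>j\<in>{1..k}. i \<noteq> j \<longrightarrow> A i \<inter> A j = {}) \<and>
     (\<Union>i\<in>{1..k}. A i) = P \<and>
     (\<forall>i\<in>{1..k}. \<forall>j\<in>{1..k}. ac_le P (A i) (A j) \<or> ac_le P (A j) (A i)) \<and>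
     (\<forall>i\<in>{1..k}. ac_le P (A 1) (A i) \<and> ac_le P (A i) (A 2)) \<and>
     (\<forall>a\<in>A 1. \<forall>b\<in>A 2. a < b) \<and>
     (\<forall>t\<in>{2..k}. \<forall>p s. consecutive P A t p s \<longrightarrow> regular_bip (A p) (A s))"

definition bip_adj :: "'a::order set \<Rightarrow> 'a set \<Rightarrow> 'a \<Rightarrow> 'a \<Rightarrow> bool" where
  "bip_adj A B u v \<longleftrightarrow> (u \<in> A \<and> v \<in> B \<and> u < v) \<or> (v \<in> A \<and> u \<in> B \<and> v < u)"

definition is_component :: "'a::order set \<Rightarrow> 'a set \<Rightarrow> 'a set \<Rightarrow> bool" where
  "is_component A B C \<longleftrightarrow> (\<exists>u\<in>A \<union> B. C = {v. (bip_adj A B)\<^sup>*\<^sup>* u v})"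

definition node_of :: "'a::order set \<Rightarrow> 'a set \<Rightarrow> 'a set \<times> 'a set \<Rightarrow> bool" where
  "node_of A B N \<longleftrightarrow> fst N \<subseteq> A \<and> snd N \<subseteq> B \<and> is_component A B (fst N \<union> snd N)"

definition is_node :: "'a::order set \<Rightarrow> (nat \<Rightarrow> 'a set) \<Rightarrow> nat \<Rightarrow> 'a set \<times> 'a set \<Rightarrow> bool" where
  "is_node P A k N \<longleftrightarrow> (\<exists>t\<in>{2..k}. \<exists>p s. consecutive P A t p s \<and> node_of (A p) (A s) N)"

definition node_width :: "'a set \<times> 'a set \<Rightarrow> nat" where
  "node_width N = card (fst N)"

definition node_int :: "'a::order set \<Rightarrow> 'a set \<times> 'a set \<Rightarrow> 'a set" where
  "node_int P N = up_set P (fst N) \<inter> down_set P (snd N)"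

definition surplus_cond :: "'a::order set \<Rightarrow> 'a set \<times> 'a set \<Rightarrow> int \<Rightarrow> bool" where
  "surplus_cond P N k \<longleftrightarrow> (\<forall>S. S \<subseteq> fst N \<and> S \<noteq> {} \<longrightarrow>
     int (card (up_set P S \<inter> snd N)) \<ge> min (int (card S) + k) (int (card (snd N))))"

definition surplus :: "'a::order set \<Rightarrow> 'a set \<times> 'a set \<Rightarrow> ereal" where
  "surplus P N = (if (\<forall>x\<in>fst N. \<forall>y\<in>snd N. x < y) then \<infinity>
                  else ereal (of_int (GREATEST k. surplus_cond P N k)))"

text \<open>Child relation of the node tree: when A_t (t \<ge> 3) is inserted between A_p \<sqsubset> A_s
consecutive at stage t-1, each node M of (A_p,A_t,<) or (A_t,A_s,<) is a child of the node N
of (A_p,A_s,<) with Int(M) \<subset> Int(N).\<close>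
definition node_child :: "'a::order set \<Rightarrow> (nat \<Rightarrow> 'a set) \<Rightarrow> nat \<Rightarrow>
    'a set \<times> 'a set \<Rightarrow> 'a set \<times> 'a set \<Rightarrow> bool" where
  "node_child P A k M N \<longleftrightarrow> (\<exists>t\<in>{3..k}. \<exists>p s. consecutive P A (t - 1) p s \<and>
     ac_less P (A p) (A t) \<and> ac_less P (A t) (A s) \<and>
     (node_of (A p) (A t) M \<or> node_of (A t) (A s) M) \<and>
     node_of (A p) (A s) N \<and> node_int P M \<subset> node_int P N)"

definition node_descendant :: "'a::order set \<Rightarrow> (nat \<Rightarrow> 'a set) \<Rightarrow> nat \<Rightarrow>
    'a set \<times> 'a set \<Rightarrow> 'a set \<times> 'a set \<Rightarrow> bool" where
  "node_descendant P A k M N \<longleftrightarrow> (node_child P A k)\<^sup>+\<^sup>+ M N"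

end

theory Submission
  imports Defs
begin

lemma comp_mem:
  assumes "is_component A B C" "x \<in> C" "bip_adj A B x y"
  shows "y \<in> C"
  using assms unfolding is_component_def
  by (auto intro: rtranclp.rtrancl_into_rtrancl)

lemma node_fwd:
  assumes "node_of A B N" "A \<inter> B = {}" "x \<in> fst N" "y \<in> B" "x < y"
  shows "y \<in> snd N"
proof -
  have comp: "is_component A B (fst N \<union> snd N)" using assms(1) unfolding node_of_def by auto
  have xA: "x \<in> A" using assms(1,3) unfolding node_of_def by auto
  have "bip_adj A B x y" unfolding bip_adj_def using xA assms by auto
  then have "y \<in> fst N \<union> snd N" using comp_mem[OF comp] assms(3) by blast
  then show ?thesis using assms(1,2,4) unfolding node_of_def by auto
qed

lemma node_bwd:
  assumes "node_of A B N" "A \<inter> B = {}" "y \<in> snd N" "x \<in> A" "x < y"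
  shows "x \<in> fst N"
proof -
  have comp: "is_component A B (fst N \<union> snd N)" using assms(1) unfolding node_of_def by auto
  have yB: "y \<in> B" using assms(1,3) unfolding node_of_def by auto
  have "bip_adj A B y x" unfolding bip_adj_def using yB assms by auto
  then have "x \<in> fst N \<union> snd N" using comp_mem[OF comp] assms(3) by blast
  then show ?thesis using assms(1,2,4) unfolding node_of_def by auto
qed

lemma comp_bij:
  assumes "node_of A B N" "A \<inter> B = {}" "bij_betw f A B" "\<forall>x\<in>A. x < f x"
  shows "f ` fst N = snd N"
proof
  show "f ` fst N \<subseteq> snd N"
  proof
    fix y assume "y \<in> f ` fst N"
    then obtain x where x: "x \<in> fst N" "y = f x" by auto
    have xA: "x \<in> A" using x assms(1) unfolding node_of_def by auto
    have yB: "y \<in> B" using xA x(2) assms(3) bij_betwE by blast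
    show "y \<in> snd N" using node_fwd[OF assms(1,2) x(1) yB] xA x(2) assms(4) by auto
  qed
next
  show "snd N \<subseteq> f ` fst N"
  proof
    fix y assume y: "y \<in> snd N"
    have yB: "y \<in> B" using y assms(1) unfolding node_of_def by auto
    then obtain x where x: "x \<in> A" "y = f x" using assms(3) by (metis bij_betw_imp_surj_on imageE)
    have "x \<in> fst N" using node_bwd[OF assms(1,2) y x(1)] x assms(4) by auto
    then show "y \<in> f ` fst N" using x by auto
  qed
qed

lemma comp_card:
  assumes "node_of A B N" "A \<inter> B = {}" "bij_betw f A B" "\<forall>x\<in>A. x < f x"
  shows "card (snd N) = card (fst N)"
proof -
  have "inj_on f (fst N)" using assms(1,3) unfolding node_of_def bij_betw_def
    by (auto intro: inj_on_subset)
  then show ?thesis using comp_bij[OF assms] card_image by metis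
qed

lemma get_matching:
  assumes "regular_bip X Y" "X \<noteq> {}" "X \<inter> Y = {}" "ac_le P X Y"
  shows "\<exists>f. bij_betw f X Y \<and> (\<forall>x\<in>X. x < f x)"
proof -
  obtain a where a: "a \<in> X" using assms(2) by auto
  then obtain b where b: "b \<in> Y" "a \<le> b" using assms(4) unfolding ac_le_def down_set_def by auto
  have "a \<noteq> b" using a b assms(3) by auto
  then have "a < b" using b by auto
  then show ?thesis using assms(1) a b unfolding regular_bip_def by blast
qed

lemma ac_le_trans: "ac_le P X Y \<Longrightarrow> ac_le P Y Z \<Longrightarrow> ac_le P X Z"
  unfolding ac_le_def down_set_def by (blast intro: order_trans)

lemma ac_le_antisym:
  assumes "antichain P X" "antichain P Y" "ac_le P X Y" "ac_le P Y X"
  shows "X = Y"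
proof
  show "X \<subseteq> Y"
  proof
    fix x assume x: "x \<in> X"
    then obtain y where y: "y \<in> Y" "x \<le> y" using assms(3) unfolding ac_le_def down_set_def by auto
    then obtain x' where x': "x' \<in> X" "y \<le> x'" using assms(4) unfolding ac_le_def down_set_def by auto
    have "x = x'" using assms(1) x x' y order_trans unfolding antichain_def by metis
    then have "x = y" using x' y by auto
    then show "x \<in> Y" using y by simp
  qed
next
  show "Y \<subseteq> X"
  proof
    fix x assume x: "x \<in> Y"
    then obtain y where y: "y \<in> X" "x \<le> y" using assms(4) unfolding ac_le_def down_set_def by auto
    then obtain x' where x': "x' \<in> Y" "y \<le> x'" using assms(3) unfolding ac_le_def down_set_def by auto
    have "x = x'" using assms(2) x x' y order_trans unfolding antichain_def by metis
    then have "x = y" using x' y by auto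
    then show "x \<in> X" using y by simp
  qed
qed

lemma greatest_int:
  fixes Q :: "int \<Rightarrow> bool"
  assumes "Q a" "\<And>k. Q k \<Longrightarrow> k \<le> b"
  shows "Q (GREATEST k. Q k) \<and> (\<forall>k. Q k \<longrightarrow> k \<le> (GREATEST k. Q k))"
proof -
  let ?F = "{k. Q k \<and> a \<le> k}"
  have fin: "finite ?F" by (rule finite_subset[of _ "{a..b}"]) (use assms in auto)
  have ne: "a \<in> ?F" using assms by auto
  define m where "m = Max ?F"
  have m: "Q m" "a \<le> m" using Max_in[OF fin] ne m_def by auto
  have big: "\<forall>k. Q k \<longrightarrow> k \<le> m"
  proof (intro allI impI)
    fix k assume "Q k"
    show "k \<le> m"
    proof (cases "a \<le> k")
      case True then show ?thesis using Max_ge[OF fin] m_def \<open>Q k\<close> by auto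
    next
      case False then show ?thesis using m(2) by auto
    qed
  qed
  have "(GREATEST k. Q k) = m" by (rule Greatest_equality) (use m big in auto)
  then show ?thesis using m big by simp
qed


lemma surplus_le:
  assumes finXM: "finite (fst M)" and sMP: "snd M \<subseteq> P"
    and finYN: "finite (snd N)" and disjN: "fst N \<inter> snd N = {}"
    and trans: "\<And>k. surplus_cond P M k \<Longrightarrow> surplus_cond P N k"
  shows "surplus P M \<le> surplus P N"
proof (cases "\<forall>x\<in>fst N. \<forall>y\<in>snd N. x < y")
  case True then show ?thesis unfolding surplus_def by simp
next
  case False
  then obtain x y where xy: "x \<in> fst N" "y \<in> snd N" "\<not> x < y" by blast
  have bound: "k \<le> int (card (snd N)) - 2" if c: "surplus_cond P N k" for k
  proof -
    have "{x} \<subseteq> fst N \<and> {x} \<noteq> {}" using xy(1) by simp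
    from c[unfolded surplus_cond_def, rule_format, OF this]
    have i1: "int (card (up_set P {x} \<inter> snd N)) \<ge> min (1 + k) (int (card (snd N)))" by simp
    have sub: "up_set P {x} \<inter> snd N \<subseteq> snd N - {y}"
    proof
      fix z assume z: "z \<in> up_set P {x} \<inter> snd N"
      have "z \<noteq> y"
      proof
        assume zy: "z = y"
        have "x \<le> z" using z unfolding up_set_def by simp
        then have "x \<le> y" using zy by simp
        moreover have "x \<noteq> y" using xy(1,2) disjN by blast
        ultimately show False using xy(3) by simp
      qed
      then show "z \<in> snd N - {y}" using z by blast
    qed
    have fin2: "finite (snd N - {y})" using finYN by simp
    have c1: "card (up_set P {x} \<inter> snd N) \<le> card (snd N - {y})"
      using card_mono[OF fin2 sub] .
    have c2: "card (snd N - {y}) = card (snd N) - 1" using xy(2) finYN by simp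
    have c3: "card (snd N) > 0" using xy(2) finYN by (auto simp: card_gt_0_iff)
    have "card (up_set P {x} \<inter> snd N) + 1 \<le> card (snd N)" using c1 c2 c3 by linarith
    then have i2: "int (card (up_set P {x} \<inter> snd N)) \<le> int (card (snd N)) - 1" by linarith
    show "k \<le> int (card (snd N)) - 2"
    proof (cases "1 + k \<le> int (card (snd N))")
      case True then show ?thesis using i1 i2 by (simp add: min_def)
    next
      case False then show ?thesis using i1 i2 by (simp add: min_def)
    qed
  qed
  show ?thesis
  proof (cases "\<forall>x\<in>fst M. \<forall>y\<in>snd M. x < y")
    case True
    have "surplus_cond P M (int (card (snd N)))"
      unfolding surplus_cond_def
    proof (intro allI impI)
      fix S assume S: "S \<subseteq> fst M \<and> S \<noteq> {}"
      then obtain a where a: "a \<in> S" by auto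
      have "up_set P S \<inter> snd M = snd M"
      proof
        show "snd M \<subseteq> up_set P S \<inter> snd M"
        proof
          fix y assume y: "y \<in> snd M"
          have "a \<le> y" using True a S y by (simp add: less_imp_le subset_iff)
          then show "y \<in> up_set P S \<inter> snd M" using y a sMP unfolding up_set_def by blast
        qed
      qed auto
      then show "int (card (up_set P S \<inter> snd M)) \<ge> min (int (card S) + int (card (snd N))) (int (card (snd M)))"
        by simp
    qed
    then have "surplus_cond P N (int (card (snd N)))" by (rule trans)
    from bound[OF this] show ?thesis by simp
  next
    case False2: False
    have w: "surplus_cond P M (- int (card (fst M)))"
      unfolding surplus_cond_def
    proof (intro allI impI)
      fix S assume S: "S \<subseteq> fst M \<and> S \<noteq> {}"
      have "card S \<le> card (fst M)" using S finXM card_mono by blast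
      then show "int (card (up_set P S \<inter> snd M)) \<ge> min (int (card S) + - int (card (fst M))) (int (card (snd M)))"
        by simp
    qed
    have boundM: "\<And>k. surplus_cond P M k \<Longrightarrow> k \<le> int (card (snd N)) - 2"
      using trans bound by blast
    have gM: "surplus_cond P M (GREATEST k. surplus_cond P M k)"
      using greatest_int[of "surplus_cond P M", OF w boundM] by blast
    have gN: "\<forall>k. surplus_cond P N k \<longrightarrow> k \<le> (GREATEST k. surplus_cond P N k)"
      using greatest_int[of "surplus_cond P N", OF trans[OF w] bound] by blast
    have "(GREATEST k. surplus_cond P M k) \<le> (GREATEST k. surplus_cond P N k)"
      using gN trans[OF gM] by blast
    then show ?thesis using False False2 unfolding surplus_def by simp
  qed
qed

lemma child_step:
  assumes fin: "finite P" and reg: "regular_poset P A k" and ch: "node_child P A k M N"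
  shows "node_width M \<le> node_width N \<and>
         (node_width M = node_width N \<longrightarrow> surplus P M \<le> surplus P N)"
proof -
  from ch obtain t p s where t: "t \<in> {3..k}" and cons: "consecutive P A (t - 1) p s"
    and pt: "ac_less P (A p) (A t)" and ts: "ac_less P (A t) (A s)"
    and Mn: "node_of (A p) (A t) M \<or> node_of (A t) (A s) M"
    and Nn: "node_of (A p) (A s) N" and IntMN: "node_int P M \<subset> node_int P N"
    unfolding node_child_def by blast
  have p: "p \<in> {1..t-1}" and s: "s \<in> {1..t-1}" and ps: "ac_less P (A p) (A s)"
    and nobetween: "\<not> (\<exists>q\<in>{1..t-1}. ac_less P (A p) (A q) \<and> ac_less P (A q) (A s))"
    using cons unfolding consecutive_def by blast+
  have maxac: "\<forall>i\<in>{1..k}. maximum_antichain P (A i)"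
    and nonempty: "\<forall>i\<in>{1..k}. A i \<noteq> {}"
    and disj: "\<forall>i\<in>{1..k}. \<forall>j\<in>{1..k}. i \<noteq> j \<longrightarrow> A i \<inter> A j = {}"
    and union: "(\<Union>i\<in>{1..k}. A i) = P"
    and regb: "\<forall>t\<in>{2..k}. \<forall>p s. consecutive P A t p s \<longrightarrow> regular_bip (A p) (A s)"
    using reg unfolding regular_poset_def by blast+
  have pk: "p \<in> {1..k}" and sk: "s \<in> {1..k}" and tk: "t \<in> {1..k}" using p s t by auto
  have acp: "antichain P (A p)" and acs: "antichain P (A s)" and act: "antichain P (A t)"
    using maxac pk sk tk unfolding maximum_antichain_def by blast+
  have subP: "\<And>i. i \<in> {1..k} \<Longrightarrow> A i \<subseteq> P" using union by blast
  have pP: "A p \<subseteq> P" and sP: "A s \<subseteq> P" and tP: "A t \<subseteq> P" using subP pk sk tk by auto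
  have ne1: "p \<noteq> t" using p t by auto
  have ne2: "t \<noteq> s" using s t by auto
  have ne3: "p \<noteq> s" using ps unfolding ac_less_def by auto
  have dpt: "A p \<inter> A t = {}" using disj pk tk ne1 by blast
  have dts: "A t \<inter> A s = {}" using disj sk tk ne2 by blast
  have dps: "A p \<inter> A s = {}" using disj pk sk ne3 by blast
  have cpt: "consecutive P A t p t"
  proof -
    have "\<not> (\<exists>q\<in>{1..t}. ac_less P (A p) (A q) \<and> ac_less P (A q) (A t))"
    proof
      assume "\<exists>q\<in>{1..t}. ac_less P (A p) (A q) \<and> ac_less P (A q) (A t)"
      then obtain q where q: "q \<in> {1..t}" "ac_less P (A p) (A q)" "ac_less P (A q) (A t)" by blast
      have "q \<noteq> t" using q(3) unfolding ac_less_def by auto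
      then have q': "q \<in> {1..t-1}" using q(1) by auto
      have le: "ac_le P (A q) (A s)" using q(3) ts ac_le_trans unfolding ac_less_def by blast
      moreover have "A q \<noteq> A s"
      proof
        assume "A q = A s"
        then have "A t = A s" using ac_le_antisym[OF act acs] q(3) ts unfolding ac_less_def by auto
        then show False using ts unfolding ac_less_def by auto
      qed
      ultimately show False using nobetween q' q(2) unfolding ac_less_def by blast
    qed
    then show ?thesis unfolding consecutive_def using p t pt by auto
  qed
  have cts: "consecutive P A t t s"
  proof -
    have "\<not> (\<exists>q\<in>{1..t}. ac_less P (A t) (A q) \<and> ac_less P (A q) (A s))"
    proof
      assume "\<exists>q\<in>{1..t}. ac_less P (A t) (A q) \<and> ac_less P (A q) (A s)"
      then obtain q where q: "q \<in> {1..t}" "ac_less P (A t) (A q)" "ac_less P (A q) (A s)" by blast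
      have "q \<noteq> t" using q(2) unfolding ac_less_def by auto
      then have q': "q \<in> {1..t-1}" using q(1) by auto
      have le: "ac_le P (A p) (A q)" using q(2) pt ac_le_trans unfolding ac_less_def by blast
      moreover have "A p \<noteq> A q"
      proof
        assume "A p = A q"
        then have "A p = A t" using ac_le_antisym[OF acp act] q(2) pt unfolding ac_less_def by auto
        then show False using pt unfolding ac_less_def by auto
      qed
      ultimately show False using nobetween q' q(3) unfolding ac_less_def by blast
    qed
    then show ?thesis unfolding consecutive_def using s t ts by auto
  qed
  have t2: "t \<in> {2..k}" and t12: "t - 1 \<in> {2..k}" using t by auto
  have rpt: "regular_bip (A p) (A t)" using regb t2 cpt by blast
  have rts: "regular_bip (A t) (A s)" using regb t2 cts by blast
  have rps: "regular_bip (A p) (A s)" using regb t12 cons by blast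
  have nep: "A p \<noteq> {}" using nonempty pk by blast
  have net: "A t \<noteq> {}" using nonempty tk by blast
  have lpt: "ac_le P (A p) (A t)" using pt unfolding ac_less_def by blast
  have lts: "ac_le P (A t) (A s)" using ts unfolding ac_less_def by blast
  have lps: "ac_le P (A p) (A s)" using ps unfolding ac_less_def by blast
  obtain f where f: "bij_betw f (A p) (A t)" "\<forall>x\<in>A p. x < f x"
    using get_matching[OF rpt nep dpt lpt] by blast
  obtain h where h: "bij_betw h (A t) (A s)" "\<forall>x\<in>A t. x < h x"
    using get_matching[OF rts net dts lts] by blast
  obtain e where e: "bij_betw e (A p) (A s)" "\<forall>x\<in>A p. x < e x"
    using get_matching[OF rps nep dps lps] by blast
  have cardN: "card (snd N) = card (fst N)" using comp_card[OF Nn dps e] .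
  have fNp: "fst N \<subseteq> A p" and sNs: "snd N \<subseteq> A s" using Nn unfolding node_of_def by auto
  have finfN: "finite (fst N)" using finite_subset[OF fNp] finite_subset[OF pP fin] by blast
  have finsN: "finite (snd N)" using finite_subset[OF sNs] finite_subset[OF sP fin] by blast
  have disjN: "fst N \<inter> snd N = {}" using fNp sNs dps by blast
  from Mn show ?thesis
  proof
    assume Mpt: "node_of (A p) (A t) M"
    have cardM: "card (snd M) = card (fst M)" using comp_card[OF Mpt dpt f] .
    have fMp: "fst M \<subseteq> A p" and sMt: "snd M \<subseteq> A t" using Mpt unfolding node_of_def by auto
    have imgf: "f ` fst M = snd M" using comp_bij[OF Mpt dpt f] .
    have sub: "fst M \<subseteq> fst N"
    proof
      fix x assume x: "x \<in> fst M"
      have xp: "x \<in> A p" using x fMp by auto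
      have fx: "f x \<in> snd M" using imgf x by auto
      have xP: "x \<in> P" using xp pP by auto
      have "x \<le> f x" using xp f(2) by (simp add: less_imp_le)
      then have "x \<in> down_set P (snd M)" unfolding down_set_def using fx xP by blast
      moreover have "x \<in> up_set P (fst M)" unfolding up_set_def using x xP by blast
      ultimately have "x \<in> node_int P M" unfolding node_int_def by blast
      then have "x \<in> node_int P N" using IntMN by auto
      then obtain x' where x': "x' \<in> fst N" "x' \<le> x" unfolding node_int_def up_set_def by auto
      then have "x' = x" using acp fNp xp unfolding antichain_def by auto
      then show "x \<in> fst N" using x' by simp
    qed
    have wle: "node_width M \<le> node_width N" unfolding node_width_def
      using sub finfN card_mono by blast
    moreover have "surplus P M \<le> surplus P N" if eqw: "node_width M = node_width N"
    proof -
      have eqf: "fst M = fst N" using card_subset_eq[OF finfN sub] eqw unfolding node_width_def by simp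
      have himg: "h ` snd M \<subseteq> snd N"
      proof
        fix z assume "z \<in> h ` snd M"
        then obtain y where y: "y \<in> snd M" "z = h y" by auto
        obtain x where x: "x \<in> fst M" "y = f x" using imgf y(1) by auto
        have "x < y" using x fMp f(2) by auto
        moreover have "y < h y" using y sMt h(2) by auto
        moreover have "h y \<in> A s" using y sMt h(1) bij_betwE by blast
        ultimately show "z \<in> snd N" using node_fwd[OF Nn dps] x(1) eqf y(2) by auto
      qed
      have injh: "inj_on h (snd M)" using h(1) sMt unfolding bij_betw_def by (auto intro: inj_on_subset)
      have cs: "card (snd M) = card (snd N)" using cardM cardN eqf by simp
      show ?thesis
      proof (rule surplus_le)
        show "finite (fst M)" using eqf finfN by simp
        show "snd M \<subseteq> P" using sMt tP by auto
        show "finite (snd N)" by (rule finsN)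
        show "fst N \<inter> snd N = {}" by (rule disjN)
      next
        fix k assume cM: "surplus_cond P M k"
        show "surplus_cond P N k" unfolding surplus_cond_def
        proof (intro allI impI)
          fix S assume S: "S \<subseteq> fst N \<and> S \<noteq> {}"
          have i1: "int (card (up_set P S \<inter> snd M)) \<ge> min (int (card S) + k) (int (card (snd M)))"
            using cM S eqf unfolding surplus_cond_def by auto
          have "h ` (up_set P S \<inter> snd M) \<subseteq> up_set P S \<inter> snd N"
          proof
            fix z assume "z \<in> h ` (up_set P S \<inter> snd M)"
            then obtain y where y: "y \<in> up_set P S" "y \<in> snd M" "z = h y" by auto
            have "y < h y" using y sMt h(2) by auto
            moreover have "h y \<in> P" using y sMt h(1) bij_betwE sP by blast
            ultimately have "z \<in> up_set P S" using y unfolding up_set_def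
              by (auto intro: order_trans less_imp_le)
            then show "z \<in> up_set P S \<inter> snd N" using himg y by auto
          qed
          moreover have "inj_on h (up_set P S \<inter> snd M)" using injh by (auto intro: inj_on_subset)
          ultimately have "card (up_set P S \<inter> snd M) \<le> card (up_set P S \<inter> snd N)"
          proof -
            have "card (up_set P S \<inter> snd M) = card (h ` (up_set P S \<inter> snd M))"
              using \<open>inj_on h (up_set P S \<inter> snd M)\<close> by (simp add: card_image)
            also have "\<dots> \<le> card (up_set P S \<inter> snd N)"
              using \<open>h ` (up_set P S \<inter> snd M) \<subseteq> up_set P S \<inter> snd N\<close> finsN
              by (intro card_mono) auto
            finally show ?thesis .
          qed
          then show "int (card (up_set P S \<inter> snd N)) \<ge> min (int (card S) + k) (int (card (snd N)))"
            using i1 cs by linarith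
        qed
      qed
    qed
    ultimately show ?thesis by blast
  next
    assume Mts: "node_of (A t) (A s) M"
    have cardM: "card (snd M) = card (fst M)" using comp_card[OF Mts dts h] .
    have fMt: "fst M \<subseteq> A t" and sMs: "snd M \<subseteq> A s" using Mts unfolding node_of_def by auto
    have imgh: "h ` fst M = snd M" using comp_bij[OF Mts dts h] .
    have sub: "snd M \<subseteq> snd N"
    proof
      fix y assume y: "y \<in> snd M"
      have ys: "y \<in> A s" using y sMs by auto
      obtain x where x: "x \<in> fst M" "y = h x" using imgh y by auto
      have "x < y" using x fMt h(2) by auto
      have yP: "y \<in> P" using ys sP by auto
      have "y \<in> down_set P (snd M)" unfolding down_set_def using y yP by blast
      moreover have "y \<in> up_set P (fst M)" unfolding up_set_def using x yP \<open>x < y\<close> less_imp_le by blast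
      ultimately have "y \<in> node_int P M" unfolding node_int_def by blast
      then have "y \<in> node_int P N" using IntMN by auto
      then obtain y' where y': "y' \<in> snd N" "y \<le> y'" unfolding node_int_def down_set_def by auto
      then have "y' = y" using acs sNs ys unfolding antichain_def by auto
      then show "y \<in> snd N" using y' by simp
    qed
    have "card (snd M) \<le> card (snd N)" using sub finsN card_mono by blast
    then have wle: "node_width M \<le> node_width N" unfolding node_width_def
      using cardM cardN by simp
    moreover have "surplus P M \<le> surplus P N" if eqw: "node_width M = node_width N"
    proof -
      have "card (snd M) = card (snd N)" using eqw cardM cardN unfolding node_width_def by simp
      then have eqs: "snd M = snd N" using card_subset_eq[OF finsN sub] by simp
      have fimg: "f ` fst N \<subseteq> fst M"
      proof
        fix z assume "z \<in> f ` fst N"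
        then obtain x where x: "x \<in> fst N" "z = f x" by auto
        have xp: "x \<in> A p" using x fNp by auto
        have zt: "z \<in> A t" using xp x f(1) bij_betwE by blast
        then obtain y where y: "y \<in> A s" "z \<le> y" using ts unfolding ac_less_def ac_le_def down_set_def by blast
        have "z \<noteq> y" using zt y dts by auto
        then have zy: "z < y" using y by auto
        have "x < z" using x xp f(2) by auto
        then have "x < y" using zy by auto
        then have "y \<in> snd N" using node_fwd[OF Nn dps x(1) y(1)] by simp
        then have "y \<in> snd M" using eqs by simp
        then show "z \<in> fst M" using node_bwd[OF Mts dts _ zt zy] by simp
      qed
      have injf: "inj_on f (fst N)" using f(1) fNp unfolding bij_betw_def by (auto intro: inj_on_subset)
      show ?thesis
      proof (rule surplus_le)
        show "finite (fst M)" using finite_subset[OF fMt] finite_subset[OF tP fin] by blast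
        show "snd M \<subseteq> P" using sMs sP by auto
        show "finite (snd N)" by (rule finsN)
        show "fst N \<inter> snd N = {}" by (rule disjN)
      next
        fix k assume cM: "surplus_cond P M k"
        show "surplus_cond P N k" unfolding surplus_cond_def
        proof (intro allI impI)
          fix S assume S: "S \<subseteq> fst N \<and> S \<noteq> {}"
          have fS: "f ` S \<subseteq> fst M \<and> f ` S \<noteq> {}" using S fimg by auto
          have i1: "int (card (up_set P (f ` S) \<inter> snd M)) \<ge> min (int (card (f ` S)) + k) (int (card (snd M)))"
            using cM fS unfolding surplus_cond_def by blast
          have cfS: "card (f ` S) = card S" using injf S by (meson card_image inj_on_subset)
          have "up_set P (f ` S) \<inter> snd M \<subseteq> up_set P S \<inter> snd N"
          proof
            fix y assume y: "y \<in> up_set P (f ` S) \<inter> snd M"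
            then obtain x where x: "x \<in> S" "f x \<le> y" "y \<in> P" unfolding up_set_def by auto
            have "x < f x" using x(1) S fNp f(2) by auto
            then have "x \<le> y" using x(2) by auto
            then show "y \<in> up_set P S \<inter> snd N" using x y eqs unfolding up_set_def by auto
          qed
          then have "card (up_set P (f ` S) \<inter> snd M) \<le> card (up_set P S \<inter> snd N)"
            using finsN by (intro card_mono) auto
          then show "int (card (up_set P S \<inter> snd N)) \<ge> min (int (card S) + k) (int (card (snd N)))"
            using i1 cfS eqs by simp
        qed
      qed
    qed
    ultimately show ?thesis by blast
  qed
qed

theorem proposition10:
  fixes P :: "'a::order set" and A :: "nat \<Rightarrow> 'a set" and k :: nat
    and M N :: "'a set \<times> 'a set"
  assumes "finite P"
    and "regular_poset P A k"
    and "node_descendant P A k M N"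
  shows "node_width M \<le> node_width N \<and>
         (node_width M = node_width N \<longrightarrow> surplus P M \<le> surplus P N)"
proof -
  have "(node_child P A k)\<^sup>+\<^sup>+ M N" using assms(3) unfolding node_descendant_def .
  then show ?thesis
  proof (induction rule: tranclp.induct)
    case (r_into_trancl a b) then show ?case using child_step[OF assms(1,2)] by blast
  next
    case (trancl_into_trancl a b c)
    have bc: "node_width b \<le> node_width c \<and>
         (node_width b = node_width c \<longrightarrow> surplus P b \<le> surplus P c)"
      using child_step[OF assms(1,2) trancl_into_trancl(2)] .
    have ab: "node_width a \<le> node_width b \<and>
         (node_width a = node_width b \<longrightarrow> surplus P a \<le> surplus P b)"
      using trancl_into_trancl(3) .
    show ?case
    proof
      show "node_width a \<le> node_width c" using ab bc by linarith
      show "node_width a = node_width c \<longrightarrow> surplus P a \<le> surplus P c"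
      proof
        assume "node_width a = node_width c"
        then have "node_width a = node_width b" "node_width b = node_width c" using ab bc by linarith+
        then have "surplus P a \<le> surplus P b" "surplus P b \<le> surplus P c" using ab bc by simp_all
        then show "surplus P a \<le> surplus P c" by (rule order_trans)
      qed
    qed
  qed
qed

end
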